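(* Let $L\in\mathbb{R}^{n\times n}$ be a real symmetric positive semidefinite matrix, let $U_k\in\mathbb{R}^{n\times k}$ have orthonormal columns that are eigenvectors of $L$, and let $\mathrm{span}(U_k)$ denote its column space. Let $\beta>0$, let $\mathrm{E},\mathrm{E}_{\text{model}}\in\mathbb{R}$, and set $a=\mathrm{E}-\mathrm{E}_{\text{model}}$. For $\phi,\rho\in\mathbb{R}^n$ define \[ \mathcal{L}(\phi,\rho)=\beta\,\|L\phi-\rho\|_2^2+\Big(a+\tfrac12\,\phi^\top\rho\Big)^2 . \] Fix $\phi\in\mathrm{span}(U_k)$. Then the unique minimizer of $\rho\mapsto\mathcal{L}(\phi,\rho)$ over $\mathrm{span}(U_k)$ is \[ \rho^\star(\phi)=L\phi-t^\star(\phi)\,\phi,\qquad t^\star(\phi)=\frac{a+\frac12\,\phi^\top L\phi}{2\beta+\frac12\,\|\phi\|_2^2}. \]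
   Context: $\mathcal{L}$ is the (squared, $L^2$) surrogate training objective combining a Poisson-equation residual $\|L\phi-\rho\|^2$ weighted by $\beta$ with a squared energy term involving the electrostatic energy $\frac12\phi^\top\rho$; $\phi$ plays the role of a potential and $\rho$ of charges on the nodes of a graph with Laplacian $L$. *)

theory Defs
  imports "HOL-Analysis.Analysis"
begin

definition surrogate_loss ::
  "real \<Rightarrow> real \<Rightarrow> real^'n^'n \<Rightarrow> real^'n \<Rightarrow> real^'n \<Rightarrow> real" where
  "surrogate_loss \<beta> a L \<phi> \<rho> = \<beta> * (norm (L *v \<phi> - \<rho>))\<^sup>2 + (a + (1/2) * (\<phi> \<bullet> \<rho>))\<^sup>2"

end

theory Submission
  imports Defs
begin

lemma key_identity:
  fixes L :: "real^'n^'n" and \<phi> d :: "real^'n"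
  assumes c: "a + (1/2) * (\<phi> \<bullet> (L *v \<phi> - t *\<^sub>R \<phi>)) = 2 * \<beta> * t"
  shows "surrogate_loss \<beta> a L \<phi> ((L *v \<phi> - t *\<^sub>R \<phi>) + d)
       = surrogate_loss \<beta> a L \<phi> (L *v \<phi> - t *\<^sub>R \<phi>) + \<beta> * (norm d)\<^sup>2 + ((1/2) * (\<phi> \<bullet> d))\<^sup>2"
proof -
  let ?r = "L *v \<phi> - t *\<^sub>R \<phi>"
  have e1: "L *v \<phi> - (?r + d) = t *\<^sub>R \<phi> - d" by simp
  have e2: "L *v \<phi> - ?r = t *\<^sub>R \<phi>" by simp
  have n1: "(norm (t *\<^sub>R \<phi> - d))\<^sup>2 = t\<^sup>2 * (norm \<phi>)\<^sup>2 - 2 * t * (\<phi> \<bullet> d) + (norm d)\<^sup>2"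
    unfolding power2_norm_eq_inner
    by (simp add: inner_diff_left inner_diff_right power2_eq_square inner_commute algebra_simps)
  have n2: "(norm (t *\<^sub>R \<phi>))\<^sup>2 = t\<^sup>2 * (norm \<phi>)\<^sup>2"
    by (simp add: power_mult_distrib)
  have i1: "a + (1/2) * (\<phi> \<bullet> (?r + d)) = 2 * \<beta> * t + (1/2) * (\<phi> \<bullet> d)"
    using c by (simp add: inner_add_right algebra_simps)
  show ?thesis
    unfolding surrogate_loss_def e1 e2 i1 c n1 n2
    by (simp add: power2_eq_square algebra_simps)
qed

theorem theorem1:
  fixes L :: "real^'n^'n" and U :: "real^'k^'n"
    and \<beta> E E_model :: real and \<phi> :: "real^'n"
  assumes sym: "transpose L = L"
    and psd: "\<forall>x. 0 \<le> x \<bullet> (L *v x)"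
    and orthonormal: "transpose U ** U = mat 1"
    and eigen: "\<forall>j. \<exists>c. L *v column j U = c *\<^sub>R column j U"
    and beta_pos: "\<beta> > 0"
    and phi_span: "\<phi> \<in> span (columns U)"
  defines "a \<equiv> E - E_model"
  defines "t \<equiv> (a + (1/2) * (\<phi> \<bullet> (L *v \<phi>))) / (2 * \<beta> + (1/2) * (norm \<phi>)\<^sup>2)"
  defines "\<rho>\<^sub>s \<equiv> L *v \<phi> - t *\<^sub>R \<phi>"
  shows "\<rho>\<^sub>s \<in> span (columns U)
    \<and> (\<forall>\<rho> \<in> span (columns U). surrogate_loss \<beta> a L \<phi> \<rho>\<^sub>s \<le> surrogate_loss \<beta> a L \<phi> \<rho>)
    \<and> (\<forall>\<rho> \<in> span (columns U).
         (\<forall>\<rho>' \<in> span (columns U). surrogate_loss \<beta> a L \<phi> \<rho> \<le> surrogate_loss \<beta> a L \<phi> \<rho>')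
         \<longrightarrow> \<rho> = \<rho>\<^sub>s)"
proof -
  have Lspan: "L *v \<phi> \<in> span (columns U)"
    using phi_span
  proof (rule span_induct[where P="\<lambda>x. L *v x \<in> span (columns U)"])
    show "subspace {x. L *v x \<in> span (columns U)}" unfolding subspace_def
      by (simp add: matrix_vector_right_distrib span_add span_zero span_scale matrix_vector_mult_scaleR)
  next
    fix x assume "x \<in> columns U"
    then obtain j where j: "x = column j U" unfolding columns_def by auto
    from eigen obtain c where "L *v column j U = c *\<^sub>R column j U" by blast
    moreover have "column j U \<in> span (columns U)"
      by (rule span_base) (auto simp: columns_def)
    ultimately show "L *v x \<in> span (columns U)" using j
      by (simp add: span_scale)
  qed
  have den: "2 * \<beta> + (1/2) * (norm \<phi>)\<^sup>2 > 0"
    using beta_pos zero_le_power2[of "norm \<phi>"] by linarith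
  have c: "a + (1/2) * (\<phi> \<bullet> (L *v \<phi> - t *\<^sub>R \<phi>)) = 2 * \<beta> * t"
  proof -
    have "t * (2 * \<beta> + (1/2) * (norm \<phi>)\<^sup>2) = a + (1/2) * (\<phi> \<bullet> (L *v \<phi>))"
      unfolding t_def using den by simp
    then show ?thesis
      by (simp add: inner_diff_right power2_norm_eq_inner algebra_simps)
  qed
  have id: "\<And>\<rho>. surrogate_loss \<beta> a L \<phi> \<rho> = surrogate_loss \<beta> a L \<phi> \<rho>\<^sub>s + \<beta> * (norm (\<rho> - \<rho>\<^sub>s))\<^sup>2 + ((1/2) * (\<phi> \<bullet> (\<rho> - \<rho>\<^sub>s)))\<^sup>2"
  proof -
    fix \<rho>
    have "\<rho> = \<rho>\<^sub>s + (\<rho> - \<rho>\<^sub>s)" by simp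
    then show "surrogate_loss \<beta> a L \<phi> \<rho> = surrogate_loss \<beta> a L \<phi> \<rho>\<^sub>s + \<beta> * (norm (\<rho> - \<rho>\<^sub>s))\<^sup>2 + ((1/2) * (\<phi> \<bullet> (\<rho> - \<rho>\<^sub>s)))\<^sup>2"
      using key_identity[OF c, of "\<rho> - \<rho>\<^sub>s"] unfolding \<rho>\<^sub>s_def by simp
  qed
  have mem: "\<rho>\<^sub>s \<in> span (columns U)"
    unfolding \<rho>\<^sub>s_def using Lspan phi_span by (simp add: span_diff span_scale)
  have ge: "\<And>\<rho>. surrogate_loss \<beta> a L \<phi> \<rho>\<^sub>s \<le> surrogate_loss \<beta> a L \<phi> \<rho>"
    using id beta_pos by (smt (verit) zero_le_power2 mult_nonneg_nonneg)
  have uniq: "\<And>\<rho>. surrogate_loss \<beta> a L \<phi> \<rho> \<le> surrogate_loss \<beta> a L \<phi> \<rho>\<^sub>s \<Longrightarrow> \<rho> = \<rho>\<^sub>s"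
  proof -
    fix \<rho>
    assume h: "surrogate_loss \<beta> a L \<phi> \<rho> \<le> surrogate_loss \<beta> a L \<phi> \<rho>\<^sub>s"
    have "\<beta> * (norm (\<rho> - \<rho>\<^sub>s))\<^sup>2 \<le> 0" using id[of \<rho>] h
      by (smt (verit) zero_le_power2)
    then have "(norm (\<rho> - \<rho>\<^sub>s))\<^sup>2 \<le> 0" using beta_pos
      by (simp add: mult_le_0_iff)
    then show "\<rho> = \<rho>\<^sub>s" by simp
  qed
  show ?thesis using mem ge uniq by blast
qed

end
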